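(* Let $\mathbf X$ be a design with centered and scaled matrix $\mathbf F$, let $\boldsymbol\beta\in\mathbb R^p$ have support $\mathcal A$ and sign vector $\boldsymbol z$, let $\lambda>0$, and assume $\mathbf C_{\mathcal A}$ is invertible. Then \[ \phi_\lambda(\mathbf X\mid\boldsymbol\beta)=P(S_\lambda\mid\mathbf F_{\mathcal A},\boldsymbol\beta_{\mathcal A})\times P(I_\lambda\mid\mathbf F,\boldsymbol z)=\phi_\lambda(\mathbf X\mid-\boldsymbol\beta), \] and consequently any design $\mathbf X^*$ that maximizes $\phi_\lambda(\cdot\mid\boldsymbol\beta)$ over all designs also maximizes $\phi_\lambda(\cdot\mid-\boldsymbol\beta)$.
   Context: A design is an $n\times p$ matrix $\mathbf X$ with entries in $\{-1,+1\}$. Let $\mathbf P_1=n^{-1}\mathbf 1\mathbf 1^T$, let $\mathbf V$ be the diagonal matrix whose diagonal entries are those of $n^{-1}\mathbf X^T(\mathbf I-\mathbf P_1)\mathbf X$, let $\mathbf F=(\mathbf I-\mathbf P_1)\mathbf X\mathbf V^{-1/2}$ and $\mathbf C=n^{-1}\mathbf F^T\mathbf F$. For $\boldsymbol\beta\in\mathbb R^p$, its support is $\mathcal A=\{j:\beta_j\neq0\}$ with $|\mathcal A|=k\ge1$, $\mathcal I$ is the complement of $\mathcal A$ in $\{1,\dots,p\}$, $\boldsymbol z=\mathrm{sign}(\boldsymbol\beta)$ componentwise, and $\mathbf Z_{\mathcal A}=\mathrm{Diag}(\boldsymbol z_{\mathcal A})$. For index sets $\mathcal U,\mathcal T$: $\mathbf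 F_{\mathcal T}$ is the submatrix of columns in $\mathcal T$, $\boldsymbol w_{\mathcal T}$ the subvector of a vector, $\mathbf M_{\mathcal U\mathcal T}$ the submatrix of a $p\times p$ matrix with rows $\mathcal U$ and columns $\mathcal T$, and $\mathbf M_{\mathcal T}=\mathbf M_{\mathcal T\mathcal T}$. Designs considered are those with $\mathbf C_{\mathcal A}$ invertible and positive diagonal of $\mathbf V_{\mathcal A}$. Let $\mathbf P_{\mathcal A}=\mathbf F_{\mathcal A}(\mathbf F_{\mathcal A}^T\mathbf F_{\mathcal A})^{-1}\mathbf F_{\mathcal A}^T$, $\lambda>0$, $\lambda_n=\lambda\sqrt n$, and $\boldsymbol e\sim N(\mathbf 0,\mathbf I_n)$. Define $\boldsymbol u=-n^{-1/2}\mathbf Z_{\mathcal A}\mathbf C_{\mathcal A}^{-1}\mathbf F_{\mathcal A}^T\boldsymbol e+\lambda_n\mathbf Z_{\mathcal A}\mathbf C_{\mathcal A}^{-1}\boldsymbol z_{\mathcal A}$ and $\boldsymbol v=n^{-1/2}\mathbf F_{\mathcal I}^T(\mathbf I-\mathbf P_{\mathcal A})\boldsymbol e+\lambda_n\mathbf C_{\mathcal I\mathcal A}\mathbf C_{\mathcal A}^{-1}\boldsymbol z_{\mathcal A}$, and the events $S_\lambda=\{\boldsymbol u<\sqrt n\,\mathbf Z_{\mathcal A}\mathbf V_{\mathcal A}^{1/2}\boldsymbol\beta_{\mathcal A}\}$ (componentwise) and $I_\lambda=\{|\boldsymbol v|\le\lambda_n\mathbf 1\}$ (componentwise; the sure event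 if $\mathcal I=\emptyset$). Their probabilities are written $P(S_\lambda\mid\mathbf F_{\mathcal A},\boldsymbol\beta_{\mathcal A})$ and $P(I_\lambda\mid\mathbf F,\boldsymbol z)$. The sign recovery criterion is $\phi_\lambda(\mathbf X\mid\boldsymbol\beta)=P(S_\lambda\cap I_\lambda)$ (these events encode the KKT conditions under which the lasso on $\mathbf F$ recovers the sign vector $\boldsymbol z$ of $\boldsymbol\beta$ in the model $\boldsymbol y=\beta_0\mathbf 1+\mathbf X\boldsymbol\beta+\boldsymbol e$). *)

theory Defs
  imports "HOL-Probability.Probability"
begin

text \<open>A design is an n x p matrix represented as a function
  X :: nat => nat => real, rows indexed by {..<n}, columns by {..<p}.
  Vectors in R^p are functions nat => real on {..<p}.  Matrices indexed
  by a finite index set T are functions nat => nat => real restricted to T x T.\<close>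

definition mat_invertible_on :: "nat set \<Rightarrow> (nat \<Rightarrow> nat \<Rightarrow> real) \<Rightarrow> bool" where
  "mat_invertible_on T M \<longleftrightarrow> (\<exists>N. (\<forall>i\<in>T. \<forall>j\<in>T. (\<Sum>k\<in>T. M i k * N k j) = (if i = j then 1 else 0))
                                  \<and> (\<forall>i\<in>T. \<forall>j\<in>T. (\<Sum>k\<in>T. N i k * M k j) = (if i = j then 1 else 0)))"

definition mat_inv_on :: "nat set \<Rightarrow> (nat \<Rightarrow> nat \<Rightarrow> real) \<Rightarrow> (nat \<Rightarrow> nat \<Rightarrow> real)" where
  "mat_inv_on T M = (SOME N. (\<forall>i\<in>T. \<forall>j\<in>T. (\<Sum>k\<in>T. M i k * N k j) = (if i = j then 1 else 0))
                                  \<and> (\<forall>i\<in>T. \<forall>j\<in>T. (\<Sum>k\<in>T. N i k * M k j) = (if i = j then 1 else 0)))"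

text \<open>(I - P_1) X\<close>
definition Xc :: "nat \<Rightarrow> (nat \<Rightarrow> nat \<Rightarrow> real) \<Rightarrow> nat \<Rightarrow> nat \<Rightarrow> real" where
  "Xc n X i j = X i j - (1 / real n) * (\<Sum>i'<n. X i' j)"

text \<open>diagonal of n^{-1} X^T (I - P_1) X\<close>
definition Vd :: "nat \<Rightarrow> (nat \<Rightarrow> nat \<Rightarrow> real) \<Rightarrow> nat \<Rightarrow> real" where
  "Vd n X j = (1 / real n) * (\<Sum>i<n. X i j * Xc n X i j)"

text \<open>F = (I - P_1) X V^{-1/2}\<close>
definition Fm :: "nat \<Rightarrow> (nat \<Rightarrow> nat \<Rightarrow> real) \<Rightarrow> nat \<Rightarrow> nat \<Rightarrow> real" where
  "Fm n X i j = Xc n X i j / sqrt (Vd n X j)"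

text \<open>C = n^{-1} F^T F\<close>
definition Cm :: "nat \<Rightarrow> (nat \<Rightarrow> nat \<Rightarrow> real) \<Rightarrow> nat \<Rightarrow> nat \<Rightarrow> real" where
  "Cm n X j k = (1 / real n) * (\<Sum>i<n. Fm n X i j * Fm n X i k)"

definition supp :: "nat \<Rightarrow> (nat \<Rightarrow> real) \<Rightarrow> nat set" where
  "supp p \<beta> = {j. j < p \<and> \<beta> j \<noteq> 0}"

definition inact :: "nat \<Rightarrow> (nat \<Rightarrow> real) \<Rightarrow> nat set" where
  "inact p \<beta> = {..<p} - supp p \<beta>"

definition sgnv :: "(nat \<Rightarrow> real) \<Rightarrow> nat \<Rightarrow> real" where
  "sgnv \<beta> j = sgn (\<beta> j)"

definition design :: "nat \<Rightarrow> nat \<Rightarrow> (nat \<Rightarrow> real) \<Rightarrow> (nat \<Rightarrow> nat \<Rightarrow> real) \<Rightarrow> bool" where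
  "design n p \<beta> X \<longleftrightarrow> (\<forall>i<n. \<forall>j<p. X i j = 1 \<or> X i j = -1)
      \<and> mat_invertible_on (supp p \<beta>) (Cm n X)
      \<and> (\<forall>j\<in>supp p \<beta>. Vd n X j > 0)"

text \<open>Law of e ~ N(0, I_n), as the product of n standard normals.\<close>
definition gauss :: "nat \<Rightarrow> (nat \<Rightarrow> real) measure" where
  "gauss n = PiM {..<n} (\<lambda>_. density lborel std_normal_density)"

text \<open>P_A = F_A (F_A^T F_A)^{-1} F_A^T\<close>
definition PA :: "nat \<Rightarrow> nat \<Rightarrow> (nat \<Rightarrow> real) \<Rightarrow> (nat \<Rightarrow> nat \<Rightarrow> real) \<Rightarrow> nat \<Rightarrow> nat \<Rightarrow> real" where
  "PA n p \<beta> X i i' =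
     (let A = supp p \<beta>; G = mat_inv_on A (\<lambda>j k. \<Sum>l<n. Fm n X l j * Fm n X l k)
      in \<Sum>j\<in>A. \<Sum>k\<in>A. Fm n X i j * G j k * Fm n X i' k)"

text \<open>u (components indexed by A)\<close>
definition uvec :: "nat \<Rightarrow> nat \<Rightarrow> real \<Rightarrow> (nat \<Rightarrow> real) \<Rightarrow> (nat \<Rightarrow> nat \<Rightarrow> real) \<Rightarrow> (nat \<Rightarrow> real) \<Rightarrow> nat \<Rightarrow> real" where
  "uvec n p lam \<beta> X e j =
     (let A = supp p \<beta>; z = sgnv \<beta>; Ci = mat_inv_on A (Cm n X)
      in - (1 / sqrt (real n)) * z j * (\<Sum>k\<in>A. Ci j k * (\<Sum>i<n. Fm n X i k * e i))
         + lam * sqrt (real n) * z j * (\<Sum>k\<in>A. Ci j k * z k))"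

text \<open>v (components indexed by I)\<close>
definition vvec :: "nat \<Rightarrow> nat \<Rightarrow> real \<Rightarrow> (nat \<Rightarrow> real) \<Rightarrow> (nat \<Rightarrow> nat \<Rightarrow> real) \<Rightarrow> (nat \<Rightarrow> real) \<Rightarrow> nat \<Rightarrow> real" where
  "vvec n p lam \<beta> X e j =
     (let A = supp p \<beta>; z = sgnv \<beta>; Ci = mat_inv_on A (Cm n X)
      in (1 / sqrt (real n)) * (\<Sum>i<n. Fm n X i j * (e i - (\<Sum>i'<n. PA n p \<beta> X i i' * e i')))
         + lam * sqrt (real n) * (\<Sum>k\<in>A. Cm n X j k * (\<Sum>l\<in>A. Ci k l * z l)))"

definition S_event :: "nat \<Rightarrow> nat \<Rightarrow> real \<Rightarrow> (nat \<Rightarrow> real) \<Rightarrow> (nat \<Rightarrow> nat \<Rightarrow> real) \<Rightarrow> (nat \<Rightarrow> real) set" where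
  "S_event n p lam \<beta> X = {e \<in> space (gauss n). \<forall>j\<in>supp p \<beta>.
      uvec n p lam \<beta> X e j < sqrt (real n) * sgnv \<beta> j * sqrt (Vd n X j) * \<beta> j}"

definition I_event :: "nat \<Rightarrow> nat \<Rightarrow> real \<Rightarrow> (nat \<Rightarrow> real) \<Rightarrow> (nat \<Rightarrow> nat \<Rightarrow> real) \<Rightarrow> (nat \<Rightarrow> real) set" where
  "I_event n p lam \<beta> X = {e \<in> space (gauss n). \<forall>j\<in>inact p \<beta>.
      \<bar>vvec n p lam \<beta> X e j\<bar> \<le> lam * sqrt (real n)}"

text \<open>Sign recovery criterion phi_lambda(X | beta)\<close>
definition phi :: "nat \<Rightarrow> nat \<Rightarrow> real \<Rightarrow> (nat \<Rightarrow> nat \<Rightarrow> real) \<Rightarrow> (nat \<Rightarrow> real) \<Rightarrow> real" where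
  "phi n p lam X \<beta> = measure (gauss n) (S_event n p lam \<beta> X \<inter> I_event n p lam \<beta> X)"

end

theory Submission
  imports Defs
begin


lemma shear_x:
  fixes f :: "real \<Rightarrow> real \<Rightarrow> ennreal"
  assumes [measurable]: "(\<lambda>(x,y). f x y) \<in> borel_measurable (borel \<Otimes>\<^sub>M borel)"
  shows "(\<integral>\<^sup>+x. \<integral>\<^sup>+y. f (x + a*y) y \<partial>lborel \<partial>lborel) = (\<integral>\<^sup>+x. \<integral>\<^sup>+y. f x y \<partial>lborel \<partial>lborel)"
proof -
  have m1: "(\<lambda>(x,y). f (x + a*y) y) \<in> borel_measurable (lborel \<Otimes>\<^sub>M lborel)" by measurable
  have m2: "(\<lambda>(x,y). f x y) \<in> borel_measurable (lborel \<Otimes>\<^sub>M lborel)" by measurable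
  have "(\<integral>\<^sup>+x. \<integral>\<^sup>+y. f (x + a*y) y \<partial>lborel \<partial>lborel) = (\<integral>\<^sup>+y. \<integral>\<^sup>+x. f (x + a*y) y \<partial>lborel \<partial>lborel)"
    using lborel_pair.Fubini'[OF m1] by simp
  also have "\<dots> = (\<integral>\<^sup>+y. \<integral>\<^sup>+x. f x y \<partial>lborel \<partial>lborel)"
  proof (rule nn_integral_cong)
    fix y :: real
    have "(\<integral>\<^sup>+x. f x y \<partial>lborel) = (\<integral>\<^sup>+x. f (a*y + 1 * x) y \<partial>lborel)"
      using nn_integral_real_affine[where c=1 and t="a*y" and f="\<lambda>x. f x y"] by simp
    then show "(\<integral>\<^sup>+x. f (x + a*y) y \<partial>lborel) = (\<integral>\<^sup>+x. f x y \<partial>lborel)"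
      by (simp add: add.commute)
  qed
  also have "\<dots> = (\<integral>\<^sup>+x. \<integral>\<^sup>+y. f x y \<partial>lborel \<partial>lborel)"
    using lborel_pair.Fubini'[OF m2] by simp
  finally show ?thesis .
qed

lemma shear_y:
  fixes f :: "real \<Rightarrow> real \<Rightarrow> ennreal"
  assumes [measurable]: "(\<lambda>(x,y). f x y) \<in> borel_measurable (borel \<Otimes>\<^sub>M borel)"
  shows "(\<integral>\<^sup>+x. \<integral>\<^sup>+y. f x (y + a*x) \<partial>lborel \<partial>lborel) = (\<integral>\<^sup>+x. \<integral>\<^sup>+y. f x y \<partial>lborel \<partial>lborel)"
proof (rule nn_integral_cong)
  fix x :: real
  have "(\<integral>\<^sup>+y. f x y \<partial>lborel) = (\<integral>\<^sup>+y. f x (a*x + 1 * y) \<partial>lborel)"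
    using nn_integral_real_affine[where c=1 and t="a*x" and f="\<lambda>y. f x y"] by simp
  then show "(\<integral>\<^sup>+y. f x (y + a*x) \<partial>lborel) = (\<integral>\<^sup>+y. f x y \<partial>lborel)"
    by (simp add: add.commute)
qed

lemma scale_xy:
  fixes f :: "real \<Rightarrow> real \<Rightarrow> ennreal"
  assumes [measurable]: "(\<lambda>(x,y). f x y) \<in> borel_measurable (borel \<Otimes>\<^sub>M borel)" and c: "c \<noteq> 0"
  shows "(\<integral>\<^sup>+x. \<integral>\<^sup>+y. f (c*x) (y/c) \<partial>lborel \<partial>lborel) = (\<integral>\<^sup>+x. \<integral>\<^sup>+y. f x y \<partial>lborel \<partial>lborel)"
proof -
  have inner: "(\<integral>\<^sup>+y. f x (y/c) \<partial>lborel) = \<bar>c\<bar> * (\<integral>\<^sup>+y. f x y \<partial>lborel)" for x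
  proof -
    have "(\<integral>\<^sup>+y. f x (y/c) \<partial>lborel) = \<bar>c\<bar> * (\<integral>\<^sup>+y. f x ((0 + c * y)/c) \<partial>lborel)"
      by (rule nn_integral_real_affine) (auto simp: c)
    then show ?thesis using c by simp
  qed
  have mh: "(\<lambda>x. \<integral>\<^sup>+y. f x y \<partial>lborel) \<in> borel_measurable borel"
    by measurable
  have "(\<integral>\<^sup>+x. \<integral>\<^sup>+y. f (c*x) (y/c) \<partial>lborel \<partial>lborel) = (\<integral>\<^sup>+x. \<bar>c\<bar> * (\<integral>\<^sup>+y. f (c*x) y \<partial>lborel) \<partial>lborel)"
    by (simp add: inner)
  also have "\<dots> = \<bar>c\<bar> * (\<integral>\<^sup>+x. (\<integral>\<^sup>+y. f (0 + c*x) y \<partial>lborel) \<partial>lborel)"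
    by (simp add: nn_integral_cmult)
  also have "\<dots> = (\<integral>\<^sup>+x. \<integral>\<^sup>+y. f x y \<partial>lborel \<partial>lborel)"
    using nn_integral_real_affine[OF mh c, of 0] by simp
  finally show ?thesis .
qed

lemma rot_lborel_nz:
  fixes f :: "real \<Rightarrow> real \<Rightarrow> ennreal"
  assumes [measurable]: "(\<lambda>(x,y). f x y) \<in> borel_measurable (borel \<Otimes>\<^sub>M borel)"
    and cs: "c\<^sup>2 + s\<^sup>2 = 1" and c: "c \<noteq> 0"
  shows "(\<integral>\<^sup>+x. \<integral>\<^sup>+y. f (c*x - s*y) (s*x + c*y) \<partial>lborel \<partial>lborel) = (\<integral>\<^sup>+x. \<integral>\<^sup>+y. f x y \<partial>lborel \<partial>lborel)"
proof -
  define g1 where "g1 x y = f x (y + (s/c)*x)" for x y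
  define g2 where "g2 x y = g1 (c*x) (y/c)" for x y
  have [measurable]: "(\<lambda>(x,y). g1 x y) \<in> borel_measurable (borel \<Otimes>\<^sub>M borel)"
    unfolding g1_def by measurable
  have [measurable]: "(\<lambda>(x,y). g2 x y) \<in> borel_measurable (borel \<Otimes>\<^sub>M borel)"
    unfolding g2_def by measurable
  have eq: "f (c*x - s*y) (s*x + c*y) = g2 (x + (-s/c)*y) y" for x y
  proof -
    have A: "c * (x + - s / c * y) = c*x - s*y" using c by (simp add: field_simps)
    have "y / c + s / c * (c*x - s*y) = s*x + y*(1 - s\<^sup>2)/c"
      using c by (simp add: field_simps power2_eq_square)
    also have "1 - s\<^sup>2 = c\<^sup>2" using cs by simp
    finally have B: "y / c + s / c * (c*x - s*y) = s*x + c*y" using c by (simp add: power2_eq_square)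
    show ?thesis unfolding g2_def g1_def A B ..
  qed
  have "(\<integral>\<^sup>+x. \<integral>\<^sup>+y. f (c*x - s*y) (s*x + c*y) \<partial>lborel \<partial>lborel)
      = (\<integral>\<^sup>+x. \<integral>\<^sup>+y. g2 (x + (-s/c)*y) y \<partial>lborel \<partial>lborel)" by (simp only: eq)
  also have "\<dots> = (\<integral>\<^sup>+x. \<integral>\<^sup>+y. g2 x y \<partial>lborel \<partial>lborel)" by (rule shear_x) measurable
  also have "\<dots> = (\<integral>\<^sup>+x. \<integral>\<^sup>+y. g1 x y \<partial>lborel \<partial>lborel)" unfolding g2_def
    by (rule scale_xy[OF _ c]) measurable
  also have "\<dots> = (\<integral>\<^sup>+x. \<integral>\<^sup>+y. f x y \<partial>lborel \<partial>lborel)" unfolding g1_def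
    by (rule shear_y) measurable
  finally show ?thesis .
qed

lemma rot_lborel:
  fixes f :: "real \<Rightarrow> real \<Rightarrow> ennreal"
  assumes [measurable]: "(\<lambda>(x,y). f x y) \<in> borel_measurable (borel \<Otimes>\<^sub>M borel)"
    and cs: "c\<^sup>2 + s\<^sup>2 = 1"
  shows "(\<integral>\<^sup>+x. \<integral>\<^sup>+y. f (c*x - s*y) (s*x + c*y) \<partial>lborel \<partial>lborel) = (\<integral>\<^sup>+x. \<integral>\<^sup>+y. f x y \<partial>lborel \<partial>lborel)"
proof (cases "c = 0")
  case False then show ?thesis using rot_lborel_nz[OF assms] by simp
next
  case True
  then have s2: "s\<^sup>2 = 1" using cs by simp
  define cc :: real where "cc = 1 / sqrt 2"
  define ss :: real where "ss = s / sqrt 2"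
  have cc2: "cc\<^sup>2 = 1/2" unfolding cc_def by (simp add: power_divide)
  have ss2: "ss\<^sup>2 = 1/2" unfolding ss_def using s2 by (simp add: power_divide)
  have csc: "cc\<^sup>2 + ss\<^sup>2 = 1" using cc2 ss2 by simp
  have ccnz: "cc \<noteq> 0" unfolding cc_def by simp
  have cs2: "2 * cc * ss = s" unfolding cc_def ss_def by simp
  define h where "h x y = f (cc*x - ss*y) (ss*x + cc*y)" for x y
  have [measurable]: "(\<lambda>(x,y). h x y) \<in> borel_measurable (borel \<Otimes>\<^sub>M borel)"
    unfolding h_def by measurable
  have eq: "f (c*x - s*y) (s*x + c*y) = h (cc*x - ss*y) (ss*x + cc*y)" for x y
  proof -
    have "cc * (cc * x - ss * y) - ss * (ss * x + cc * y) = (cc\<^sup>2 - ss\<^sup>2)*x - (2 * cc * ss)*y"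
      by (simp add: algebra_simps power2_eq_square)
    also have "\<dots> = c*x - s*y" using cc2 ss2 cs2 True by simp
    finally have 1: "cc * (cc * x - ss * y) - ss * (ss * x + cc * y) = c*x - s*y" .
    have "ss * (cc * x - ss * y) + cc * (ss * x + cc * y) = (2 * cc * ss)*x + (cc\<^sup>2 - ss\<^sup>2)*y"
      by (simp add: algebra_simps power2_eq_square)
    also have "\<dots> = s*x + c*y" using cc2 ss2 cs2 True by simp
    finally have 2: "ss * (cc * x - ss * y) + cc * (ss * x + cc * y) = s*x + c*y" .
    show ?thesis unfolding h_def 1 2 ..
  qed
  have "(\<integral>\<^sup>+x. \<integral>\<^sup>+y. h (cc*x - ss*y) (ss*x + cc*y) \<partial>lborel \<partial>lborel) = (\<integral>\<^sup>+x. \<integral>\<^sup>+y. h x y \<partial>lborel \<partial>lborel)"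
    by (rule rot_lborel_nz[OF _ csc ccnz]) measurable
  also have "\<dots> = (\<integral>\<^sup>+x. \<integral>\<^sup>+y. f x y \<partial>lborel \<partial>lborel)" unfolding h_def
    by (rule rot_lborel_nz[OF _ csc ccnz]) measurable
  finally show ?thesis unfolding eq .
qed

lemma std_normal_rot:
  assumes cs: "c\<^sup>2 + s\<^sup>2 = 1"
  shows "std_normal_density (c*x - s*y) * std_normal_density (s*x + c*y) = std_normal_density x * std_normal_density y"
proof -
  have "(c*x - s*y)\<^sup>2 + (s*x + c*y)\<^sup>2 = (c\<^sup>2 + s\<^sup>2) * (x\<^sup>2 + y\<^sup>2)"
    by (simp add: algebra_simps power2_eq_square)
  then have e: "(c*x - s*y)\<^sup>2 + (s*x + c*y)\<^sup>2 = x\<^sup>2 + y\<^sup>2" using cs by simp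
  have "std_normal_density a * std_normal_density b = (1 / sqrt (2*pi))\<^sup>2 * exp (- (a\<^sup>2 + b\<^sup>2) / 2)" for a b
    unfolding std_normal_density_def by (simp add: power2_eq_square exp_add[symmetric] add_divide_distrib diff_divide_distrib)
  then show ?thesis using e by simp
qed

abbreviation "NN \<equiv> density lborel (\<lambda>x. ennreal (std_normal_density x))"

lemma rot_gauss2:
  fixes f :: "real \<Rightarrow> real \<Rightarrow> ennreal"
  assumes [measurable]: "(\<lambda>(x,y). f x y) \<in> borel_measurable (borel \<Otimes>\<^sub>M borel)"
    and cs: "c\<^sup>2 + s\<^sup>2 = 1"
  shows "(\<integral>\<^sup>+x. \<integral>\<^sup>+y. f (c*x - s*y) (s*x + c*y) \<partial>NN \<partial>NN) = (\<integral>\<^sup>+x. \<integral>\<^sup>+y. f x y \<partial>NN \<partial>NN)"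
proof -
  define h where "h x y = ennreal (std_normal_density x) * ennreal (std_normal_density y) * f x y" for x y
  have [measurable]: "(\<lambda>(x,y). h x y) \<in> borel_measurable (borel \<Otimes>\<^sub>M borel)"
    unfolding h_def by measurable
  have L: "(\<integral>\<^sup>+x. \<integral>\<^sup>+y. g x y \<partial>NN \<partial>NN) = (\<integral>\<^sup>+x. \<integral>\<^sup>+y. ennreal (std_normal_density x) * ennreal (std_normal_density y) * g x y \<partial>lborel \<partial>lborel)"
    if [measurable]: "(\<lambda>(x,y). g x y) \<in> borel_measurable (borel \<Otimes>\<^sub>M borel)" for g
    by (simp add: nn_integral_density nn_integral_cmult[symmetric] mult.assoc)
  have "(\<integral>\<^sup>+x. \<integral>\<^sup>+y. f (c*x - s*y) (s*x + c*y) \<partial>NN \<partial>NN)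
     = (\<integral>\<^sup>+x. \<integral>\<^sup>+y. h (c*x - s*y) (s*x + c*y) \<partial>lborel \<partial>lborel)"
    apply (subst L) apply measurable
    unfolding h_def using std_normal_rot[OF cs]
    by (simp add: ennreal_mult'[symmetric] ennreal_mult[symmetric] mult.assoc)
  also have "\<dots> = (\<integral>\<^sup>+x. \<integral>\<^sup>+y. h x y \<partial>lborel \<partial>lborel)" by (rule rot_lborel[OF _ cs]) measurable
  also have "\<dots> = (\<integral>\<^sup>+x. \<integral>\<^sup>+y. f x y \<partial>NN \<partial>NN)" unfolding h_def by (subst L) simp_all
  finally show ?thesis .
qed

lemma prob_NN: "prob_space NN"
  using prob_space_normal_density by simp

lemma sets_NN[measurable_cong]: "sets NN = sets borel" by simp

interpretation NNps: prob_space NN by (rule prob_NN)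

interpretation NNprod: product_sigma_finite "\<lambda>_::nat. NN"
  by (intro product_sigma_finite.intro NNps.sigma_finite_measure_axioms)

lemma PiM_split2:
  fixes I :: "nat set"
  assumes fin: "finite I" and ij: "i \<in> I" "j \<in> I" "i \<noteq> j"
    and h[measurable]: "h \<in> borel_measurable (PiM I (\<lambda>_. NN))"
  shows "(\<integral>\<^sup>+x. h x \<partial>PiM I (\<lambda>_. NN)) =
     (\<integral>\<^sup>+w. (\<integral>\<^sup>+a. (\<integral>\<^sup>+b. h (w(j := a, i := b)) \<partial>NN) \<partial>NN) \<partial>PiM (I - {i,j}) (\<lambda>_. NN))"
proof -
  define J where "J = I - {i,j}"
  have I: "I = insert i (insert j J)" using ij unfolding J_def by auto
  have fJ: "finite J" "finite (insert j J)" using fin unfolding J_def by auto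
  have nJ: "i \<notin> insert j J" "j \<notin> J" using ij unfolding J_def by auto
  have h'[measurable]: "h \<in> borel_measurable (PiM (insert i (insert j J)) (\<lambda>_. NN))" using h I by simp
  have "(\<integral>\<^sup>+x. h x \<partial>PiM I (\<lambda>_. NN)) = (\<integral>\<^sup>+x. (\<integral>\<^sup>+b. h (x(i := b)) \<partial>NN) \<partial>PiM (insert j J) (\<lambda>_. NN))"
    unfolding I by (rule NNprod.product_nn_integral_insert[OF fJ(2) nJ(1) h'])
  also have "\<dots> = (\<integral>\<^sup>+w. (\<integral>\<^sup>+a. (\<integral>\<^sup>+b. h (w(j := a, i := b)) \<partial>NN) \<partial>NN) \<partial>PiM J (\<lambda>_. NN))"
    by (rule NNprod.product_nn_integral_insert[OF fJ(1) nJ(2)]) measurable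
  finally show ?thesis unfolding J_def .
qed

lemma upd2_meas:
  fixes I :: "nat set"
  assumes "i \<in> I" "j \<in> I"
  shows "(\<lambda>x. x(i := c * x i - s * x j, j := s * x i + c * x j)) \<in> measurable (PiM I (\<lambda>_. NN)) (PiM I (\<lambda>_. NN))"
proof -
  have 1: "(\<lambda>x. x(i := c * x i - s * x j)) \<in> measurable (PiM I (\<lambda>_. NN)) (PiM I (\<lambda>_. NN))"
    by (rule measurable_fun_upd[where J=I]) (use assms in auto)
  show ?thesis
    by (rule measurable_fun_upd[where J=I, OF _ 1]) (use assms in auto)
qed

lemma giv_PiM:
  fixes I :: "nat set"
  assumes fin: "finite I" and ij: "i \<in> I" "j \<in> I" "i \<noteq> j" and cs: "c\<^sup>2 + s\<^sup>2 = 1"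
    and g[measurable]: "g \<in> borel_measurable (PiM I (\<lambda>_. NN))"
  shows "(\<integral>\<^sup>+x. g (x(i := c * x i - s * x j, j := s * x i + c * x j)) \<partial>PiM I (\<lambda>_. NN)) = (\<integral>\<^sup>+x. g x \<partial>PiM I (\<lambda>_. NN))"
proof -
  have [measurable]: "(\<lambda>x. g (x(i := c * x i - s * x j, j := s * x i + c * x j))) \<in> borel_measurable (PiM I (\<lambda>_. NN))"
    using measurable_comp[OF upd2_meas[OF ij(1,2)] g] by (simp add: o_def)
  have inner: "(\<integral>\<^sup>+a. (\<integral>\<^sup>+b. g ((w(j := a, i := b))(i := c * b - s * a, j := s * b + c * a)) \<partial>NN) \<partial>NN)
      = (\<integral>\<^sup>+a. (\<integral>\<^sup>+b. g (w(j := a, i := b)) \<partial>NN) \<partial>NN)"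
    if w: "w \<in> space (PiM (I - {i,j}) (\<lambda>_. NN))" for w
  proof -
    define K where "K a b = g (w(j := a, i := b))" for a b
    have mK: "(\<lambda>(a,b). K a b) \<in> borel_measurable (borel \<Otimes>\<^sub>M borel)"
    proof -
      have "(\<lambda>x. (w(j := fst x))(i := snd x)) \<in> measurable (borel \<Otimes>\<^sub>M borel) (PiM I (\<lambda>_. NN))"
      proof (rule measurable_fun_upd[where J="(I - {i,j}) \<union> {j}"])
        show "I = (I - {i, j}) \<union> {j} \<union> {i}" using ij by auto
        show "(\<lambda>x. w(j := fst x)) \<in> measurable (borel \<Otimes>\<^sub>M borel) (Pi\<^sub>M (I - {i, j} \<union> {j}) (\<lambda>_. NN))"
          by (rule measurable_fun_upd[where J="I - {i,j}"]) (use w in auto)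
        show "(\<lambda>x. snd x) \<in> measurable (borel \<Otimes>\<^sub>M borel) NN" by simp
      qed
      from measurable_comp[OF this g] show ?thesis unfolding K_def by (simp add: o_def case_prod_beta)
    qed
    have eq: "g ((w(j := a, i := b))(i := c * b - s * a, j := s * b + c * a)) = K (c*a - (-s)*b) ((-s)*a + c*b)" for a b
      unfolding K_def using ij by (auto intro!: arg_cong[where f=g] simp: fun_eq_iff)
    have cs': "c\<^sup>2 + (-s)\<^sup>2 = 1" using cs by simp
    show ?thesis unfolding eq using rot_gauss2[OF mK cs'] unfolding K_def .
  qed
  have "(\<integral>\<^sup>+x. g (x(i := c * x i - s * x j, j := s * x i + c * x j)) \<partial>PiM I (\<lambda>_. NN))
     = (\<integral>\<^sup>+w. (\<integral>\<^sup>+a. (\<integral>\<^sup>+b. g ((w(j := a, i := b))(i := c * b - s * a, j := s * b + c * a)) \<partial>NN) \<partial>NN) \<partial>PiM (I - {i,j}) (\<lambda>_. NN))"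
    using PiM_split2[OF fin ij, of "\<lambda>x. g (x(i := c * x i - s * x j, j := s * x i + c * x j))"] ij by simp
  also have "\<dots> = (\<integral>\<^sup>+w. (\<integral>\<^sup>+a. (\<integral>\<^sup>+b. g (w(j := a, i := b)) \<partial>NN) \<partial>NN) \<partial>PiM (I - {i,j}) (\<lambda>_. NN))"
    by (rule nn_integral_cong) (rule inner)
  also have "\<dots> = (\<integral>\<^sup>+x. g x \<partial>PiM I (\<lambda>_. NN))"
    using PiM_split2[OF fin ij g] by simp
  finally show ?thesis .
qed



lemma gauss_eq: "gauss n = PiM {..<n} (\<lambda>_. NN)"
  unfolding gauss_def ..

definition mv :: "nat \<Rightarrow> (nat \<Rightarrow> nat \<Rightarrow> real) \<Rightarrow> (nat \<Rightarrow> real) \<Rightarrow> nat \<Rightarrow> real" where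
  "mv n M x = restrict (\<lambda>i. \<Sum>j<n. M i j * x j) {..<n}"

definition mmul :: "nat \<Rightarrow> (nat \<Rightarrow> nat \<Rightarrow> real) \<Rightarrow> (nat \<Rightarrow> nat \<Rightarrow> real) \<Rightarrow> nat \<Rightarrow> nat \<Rightarrow> real" where
  "mmul n A B i j = (\<Sum>l<n. A i l * B l j)"

definition good :: "nat \<Rightarrow> (nat \<Rightarrow> nat \<Rightarrow> real) \<Rightarrow> bool" where
  "good n M \<longleftrightarrow> (\<forall>g \<in> borel_measurable (gauss n). (\<integral>\<^sup>+x. g (mv n M x) \<partial>gauss n) = (\<integral>\<^sup>+x. g x \<partial>gauss n))"

definition ortho :: "nat \<Rightarrow> (nat \<Rightarrow> nat \<Rightarrow> real) \<Rightarrow> bool" where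
  "ortho n M \<longleftrightarrow> (\<forall>i<n. \<forall>j<n. (\<Sum>l<n. M i l * M j l) = (if i = j then 1 else 0))"

lemma mv_meas[measurable]: "mv n M \<in> measurable (gauss n) (gauss n)"
  unfolding mv_def gauss_eq by (intro measurable_restrict) measurable

lemma mv_mmul: "mv n (mmul n A B) x = mv n A (mv n B x)"
proof -
  have "(\<Sum>j<n. (\<Sum>l<n. A i l * B l j) * x j) = (\<Sum>l<n. A i l * (\<Sum>j<n. B l j * x j))" for i
    by (simp add: sum_distrib_left sum_distrib_right mult.assoc) (rule sum.swap)
  then show ?thesis unfolding mv_def mmul_def by (auto simp: fun_eq_iff)
qed

lemma good_mmul:
  assumes "good n A" "good n B" shows "good n (mmul n A B)"
  unfolding good_def
proof
  fix g :: "_ \<Rightarrow> ennreal" assume g[measurable]: "g \<in> borel_measurable (gauss n)"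
  have "(\<integral>\<^sup>+x. g (mv n (mmul n A B) x) \<partial>gauss n) = (\<integral>\<^sup>+x. (\<lambda>y. g (mv n A y)) (mv n B x) \<partial>gauss n)"
    by (simp add: mv_mmul)
  also have "\<dots> = (\<integral>\<^sup>+x. g (mv n A x) \<partial>gauss n)"
    using assms(2) unfolding good_def by (rule bspec) measurable
  also have "\<dots> = (\<integral>\<^sup>+x. g x \<partial>gauss n)"
    using assms(1) unfolding good_def by (rule bspec) measurable
  finally show "(\<integral>\<^sup>+x. g (mv n (mmul n A B) x) \<partial>gauss n) = (\<integral>\<^sup>+x. g x \<partial>gauss n)" .
qed

lemma ortho_mmul:
  assumes A: "ortho n A" and B: "ortho n B" shows "ortho n (mmul n A B)"
  unfolding ortho_def
proof (intro allI impI)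
  fix i j assume ij: "i < n" "j < n"
  have "(\<Sum>l<n. mmul n A B i l * mmul n A B j l) = (\<Sum>l<n. \<Sum>p<n. \<Sum>q<n. A i p * A j q * (B p l * B q l))"
    unfolding mmul_def by (simp add: sum_product mult_ac)
  also have "\<dots> = (\<Sum>p<n. \<Sum>l<n. \<Sum>q<n. A i p * A j q * (B p l * B q l))"
    by (rule sum.swap)
  also have "\<dots> = (\<Sum>p<n. \<Sum>q<n. \<Sum>l<n. A i p * A j q * (B p l * B q l))"
    by (rule sum.cong[OF refl], rule sum.swap)
  also have "\<dots> = (\<Sum>p<n. \<Sum>q<n. A i p * A j q * (\<Sum>l<n. B p l * B q l))"
    by (simp add: sum_distrib_left)
  also have "\<dots> = (\<Sum>p<n. A i p * A j p)"
  proof (rule sum.cong[OF refl])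
    fix p assume p: "p \<in> {..<n}"
    have "(\<Sum>q<n. A i p * A j q * (\<Sum>l<n. B p l * B q l)) = (\<Sum>q<n. A i p * A j q * (if p = q then 1 else 0))"
      using B p unfolding ortho_def by (intro sum.cong) auto
    also have "\<dots> = A i p * A j p" using p by (simp add: if_distrib sum.delta cong: if_cong)
    finally show "(\<Sum>q<n. A i p * A j q * (\<Sum>l<n. B p l * B q l)) = A i p * A j p" .
  qed
  also have "\<dots> = (if i = j then 1 else 0)" using A ij unfolding ortho_def by simp
  finally show "(\<Sum>l<n. mmul n A B i l * mmul n A B j l) = (if i = j then 1 else 0)" .
qed

definition giv :: "nat \<Rightarrow> nat \<Rightarrow> real \<Rightarrow> real \<Rightarrow> nat \<Rightarrow> nat \<Rightarrow> real" where
  "giv i j c s a b = (if a = i \<and> b = i then c else if a = j \<and> b = j then c else if a = i \<and> b = j then -s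
     else if a = j \<and> b = i then s else if a = b then 1 else 0)"

lemma giv_row:
  assumes "i < n" "j < n" "i \<noteq> j" "a < n"
  shows "(\<Sum>b<n. giv i j c s a b * x b) = (if a = i then c * x i - s * x j else if a = j then s * x i + c * x j else x a)"
proof -
  have "(\<Sum>b<n. giv i j c s a b * x b) = (\<Sum>b<n. (if b = i then giv i j c s a i * x i else 0) + (if b = j then giv i j c s a j * x j else 0)
        + (if b = a \<and> a \<noteq> i \<and> a \<noteq> j then x a else 0))"
    using assms by (intro sum.cong) (auto simp: giv_def)
  also have "\<dots> = giv i j c s a i * x i + giv i j c s a j * x j + (if a \<noteq> i \<and> a \<noteq> j then x a else 0)"
    using assms by (simp add: sum.distrib sum.delta)
  finally show ?thesis using assms by (auto simp: giv_def)
qed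

lemma giv_col:
  assumes "i < n" "j < n" "i \<noteq> j" "a < n"
  shows "(\<Sum>b<n. giv i j c s b a * x b) = (if a = i then c * x i + s * x j else if a = j then - s * x i + c * x j else x a)"
proof -
  have "(\<Sum>b<n. giv i j c s b a * x b) = (\<Sum>b<n. (if b = i then giv i j c s i a * x i else 0) + (if b = j then giv i j c s j a * x j else 0)
        + (if b = a \<and> a \<noteq> i \<and> a \<noteq> j then x a else 0))"
    using assms by (intro sum.cong) (auto simp: giv_def)
  also have "\<dots> = giv i j c s i a * x i + giv i j c s j a * x j + (if a \<noteq> i \<and> a \<noteq> j then x a else 0)"
    using assms by (simp add: sum.distrib sum.delta)
  finally show ?thesis using assms by (auto simp: giv_def)
qed

lemma ortho_giv:
  assumes "i < n" "j < n" "i \<noteq> j" "c\<^sup>2 + s\<^sup>2 = 1"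
  shows "ortho n (giv i j c s)"
  unfolding ortho_def
proof (intro allI impI)
  fix a b assume ab: "a < n" "b < n"
  have "(\<Sum>l<n. giv i j c s a l * giv i j c s b l) =
     (if a = i then c * giv i j c s b i - s * giv i j c s b j else if a = j then s * giv i j c s b i + c * giv i j c s b j else giv i j c s b a)"
    using giv_row[OF assms(1-3) ab(1), of c s "\<lambda>l. giv i j c s b l"] .
  also have "\<dots> = (if a = b then 1 else 0)"
    using assms ab by (auto simp: giv_def power2_eq_square algebra_simps)
  finally show "(\<Sum>l<n. giv i j c s a l * giv i j c s b l) = (if a = b then 1 else 0)" .
qed

lemma good_giv:
  assumes ij: "i < n" "j < n" "i \<noteq> j" and cs: "c\<^sup>2 + s\<^sup>2 = 1"
  shows "good n (giv i j c s)"
  unfolding good_def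
proof
  fix g :: "_ \<Rightarrow> ennreal" assume g[measurable]: "g \<in> borel_measurable (gauss n)"
  have "(\<integral>\<^sup>+x. g (mv n (giv i j c s) x) \<partial>gauss n) = (\<integral>\<^sup>+x. g (x(i := c * x i - s * x j, j := s * x i + c * x j)) \<partial>gauss n)"
  proof (rule nn_integral_cong)
    fix x assume x: "x \<in> space (gauss n)"
    then have ext: "x k = undefined" if "k \<notin> {..<n}" for k
      using that by (auto simp: gauss_eq space_PiM PiE_def extensional_def)
    have "mv n (giv i j c s) x = x(i := c * x i - s * x j, j := s * x i + c * x j)"
      unfolding mv_def using ij ext by (auto simp: fun_eq_iff giv_row)
    then show "g (mv n (giv i j c s) x) = g (x(i := c * x i - s * x j, j := s * x i + c * x j))" by simp
  qed
  also have "\<dots> = (\<integral>\<^sup>+x. g x \<partial>gauss n)"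
    unfolding gauss_eq by (rule giv_PiM) (use ij cs g in \<open>auto simp: gauss_eq\<close>)
  finally show "(\<integral>\<^sup>+x. g (mv n (giv i j c s) x) \<partial>gauss n) = (\<integral>\<^sup>+x. g x \<partial>gauss n)" .
qed

definition idm :: "nat \<Rightarrow> nat \<Rightarrow> real" where "idm a b = (if a = b then 1 else 0)"

lemma delta_mult1: "(if a = b then 1 else 0) * (x::real) = (if a = b then x else 0)" by simp
lemma delta_mult2: "(x::real) * (if a = b then 1 else 0) = (if a = b then x else 0)" by simp

lemma good_idm: "good n idm"
  unfolding good_def
proof
  fix g :: "_ \<Rightarrow> ennreal" assume g[measurable]: "g \<in> borel_measurable (gauss n)"
  show "(\<integral>\<^sup>+x. g (mv n idm x) \<partial>gauss n) = (\<integral>\<^sup>+x. g x \<partial>gauss n)"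
  proof (rule nn_integral_cong)
    fix x assume x: "x \<in> space (gauss n)"
    then have ext: "x k = undefined" if "k \<notin> {..<n}" for k
      using that by (auto simp: gauss_eq space_PiM PiE_def extensional_def)
    have "mv n idm x = x" unfolding mv_def idm_def using ext
      by (auto simp: fun_eq_iff delta_mult1 sum.delta)
    then show "g (mv n idm x) = g x" by simp
  qed
qed

lemma ortho_idm: "ortho n idm"
  unfolding ortho_def idm_def by (auto simp: delta_mult1 sum.delta)

definition tv :: "nat \<Rightarrow> (nat \<Rightarrow> nat \<Rightarrow> real) \<Rightarrow> (nat \<Rightarrow> real) \<Rightarrow> nat \<Rightarrow> real" where
  "tv n W g m = (\<Sum>l<n. W l m * g l)"

lemma tv_mmul: "tv n (mmul n W B) g m = (\<Sum>p<n. B p m * tv n W g p)"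
  unfolding tv_def mmul_def
  by (simp add: sum_distrib_left sum_distrib_right mult_ac) (rule sum.swap)

definition fixr :: "nat \<Rightarrow> nat \<Rightarrow> (nat \<Rightarrow> nat \<Rightarrow> real) \<Rightarrow> bool" where
  "fixr n r W \<longleftrightarrow> (\<forall>l<n. \<forall>m<n. (l < r \<or> m < r) \<longrightarrow> W l m = (if l = m then 1 else 0))"

lemma zero_lemma:
  assumes r: "r < n"
  shows "\<exists>W. good n W \<and> ortho n W \<and> fixr n r W \<and> (\<forall>m. r < m \<and> m \<le> r + t \<and> m < n \<longrightarrow> tv n W g m = 0)"
proof (induction t)
  case 0
  have "fixr n r idm" by (auto simp: fixr_def idm_def)
  then show ?case using good_idm ortho_idm by (intro exI[of _ idm]) auto
next
  case (Suc t)
  then obtain W where W: "good n W" "ortho n W" "fixr n r W" and Z: "\<forall>m. r < m \<and> m \<le> r + t \<and> m < n \<longrightarrow> tv n W g m = 0"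
    by blast
  define m0 where "m0 = Suc (r + t)"
  show ?case
  proof (cases "m0 < n")
    case False
    then show ?thesis using W Z unfolding m0_def by (intro exI[of _ W]) auto
  next
    case True
    define h where "h = tv n W g"
    define \<rho> where "\<rho> = sqrt ((h r)\<^sup>2 + (h m0)\<^sup>2)"
    define c where "c = (if \<rho> = 0 then 1 else h r / \<rho>)"
    define s where "s = (if \<rho> = 0 then 0 else h m0 / \<rho>)"
    have rm0: "r < n" "m0 < n" "r \<noteq> m0" using r True unfolding m0_def by auto
    have cs: "c\<^sup>2 + s\<^sup>2 = 1"
    proof (cases "\<rho> = 0")
      case False
      have "\<rho>\<^sup>2 = (h r)\<^sup>2 + (h m0)\<^sup>2" unfolding \<rho>_def by simp
      have "(h r / \<rho>)\<^sup>2 + (h m0 / \<rho>)\<^sup>2 = ((h r)\<^sup>2 + (h m0)\<^sup>2) / \<rho>\<^sup>2"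
        by (simp add: power_divide add_divide_distrib)
      also have "\<dots> = 1" using False \<open>\<rho>\<^sup>2 = _\<close>[symmetric] by simp
      finally show ?thesis using False unfolding c_def s_def by simp
    qed (simp add: c_def s_def)
    have kill: "- s * h r + c * h m0 = 0"
    proof (cases "\<rho> = 0")
      case True
      then have "(h r)\<^sup>2 + (h m0)\<^sup>2 = 0" unfolding \<rho>_def by simp
      then have "h m0 = 0" by (simp add: sum_power2_eq_zero_iff)
      then show ?thesis unfolding c_def s_def using True by simp
    next
      case False then show ?thesis unfolding c_def s_def by (simp add: field_simps)
    qed
    define W' where "W' = mmul n W (giv r m0 c s)"
    have tvW': "tv n W' g m = (if m = r then c * h r + s * h m0 else if m = m0 then - s * h r + c * h m0 else h m)"
      if "m < n" for m
      unfolding W'_def tv_mmul h_def[symmetric] using giv_col[OF rm0 that] by simp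
    have "good n W'" unfolding W'_def by (intro good_mmul W good_giv rm0 cs)
    moreover have "ortho n W'" unfolding W'_def by (intro ortho_mmul W ortho_giv rm0 cs)
    moreover have "fixr n r W'" unfolding fixr_def
    proof (intro allI impI)
      fix l m assume lm: "l < n" "m < n" "l < r \<or> m < r"
      show "W' l m = (if l = m then 1 else 0)"
      proof (cases "m < r")
        case True
        have "W' l m = (\<Sum>p<n. giv r m0 c s p m * W l p)" unfolding W'_def mmul_def by (simp add: mult.commute)
        also have "\<dots> = W l m" using giv_col[OF rm0 lm(2)] True rm0 unfolding m0_def by auto
        finally show ?thesis using W(3) lm unfolding fixr_def by simp
      next
        case False
        then have l: "l < r" using lm by auto
        have "W' l m = (\<Sum>p<n. W l p * giv r m0 c s p m)" unfolding W'_def mmul_def ..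
        also have "\<dots> = (\<Sum>p<n. (if l = p then 1 else 0) * giv r m0 c s p m)"
          using W(3) l lm unfolding fixr_def by (intro sum.cong) auto
        also have "\<dots> = giv r m0 c s l m" using lm by (simp add: delta_mult1 sum.delta)
        also have "\<dots> = (if l = m then 1 else 0)" using l rm0 unfolding giv_def m0_def by auto
        finally show ?thesis .
      qed
    qed
    moreover have "\<forall>m. r < m \<and> m \<le> r + Suc t \<and> m < n \<longrightarrow> tv n W' g m = 0"
    proof (intro allI impI)
      fix m assume m: "r < m \<and> m \<le> r + Suc t \<and> m < n"
      show "tv n W' g m = 0"
      proof (cases "m = m0")
        case True then show ?thesis using tvW' m kill rm0 by simp
      next
        case False
        then have "m \<le> r + t" using m unfolding m0_def by auto
        then show ?thesis using tvW' m Z False h_def by auto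
      qed
    qed
    ultimately show ?thesis by blast
  qed
qed



definition indep :: "nat \<Rightarrow> nat \<Rightarrow> (nat \<Rightarrow> nat \<Rightarrow> real) \<Rightarrow> bool" where
  "indep n k V \<longleftrightarrow> (\<forall>c. (\<forall>i<n. (\<Sum>j<k. c j * V j i) = 0) \<longrightarrow> (\<forall>j<k. c j = 0))"

lemma indep_Suc: "indep n (Suc k) V \<Longrightarrow> indep n k V"
  unfolding indep_def
proof (intro allI impI)
  fix c j assume H: "\<forall>c. (\<forall>i<n. (\<Sum>j<Suc k. c j * V j i) = 0) \<longrightarrow> (\<forall>j<Suc k. c j = 0)"
    and c: "\<forall>i<n. (\<Sum>j<k. c j * V j i) = 0" and j: "j < k"
  define c' where "c' j = (if j < k then c j else 0)" for j
  have "\<forall>i<n. (\<Sum>j<Suc k. c' j * V j i) = 0" using c unfolding c'_def by simp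
  then have A: "\<forall>j<Suc k. c' j = 0" using H by blast
  have "c' j = 0" using A j by simp
  then show "c j = 0" using j unfolding c'_def by simp
qed

lemma indep_contra:
  assumes "indep n (Suc k) V" and "\<forall>i<n. V k i = (\<Sum>j<k. e j * V j i)"
  shows False
proof -
  define c where "c j = (if j < k then e j else -1)" for j
  have "\<forall>i<n. (\<Sum>j<Suc k. c j * V j i) = 0" using assms(2) unfolding c_def by simp
  then have "c k = 0" using assms(1) unfolding indep_def by blast
  then show False unfolding c_def by simp
qed

lemma completeness:
  assumes "ortho n M" "i < n"
  shows "v i = (\<Sum>m<n. (\<Sum>l<n. M l m * v l) * M i m)"
proof -
  have "(\<Sum>m<n. (\<Sum>l<n. M l m * v l) * M i m) = (\<Sum>l<n. v l * (\<Sum>m<n. M i m * M l m))"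
    by (simp add: sum_distrib_left sum_distrib_right mult_ac) (rule sum.swap)
  also have "\<dots> = (\<Sum>l<n. v l * (if i = l then 1 else 0))"
    using assms unfolding ortho_def by (intro sum.cong) auto
  also have "\<dots> = v i" using assms by (simp add: delta_mult2 sum.delta)
  finally show ?thesis by simp
qed

lemma sum_split_k:
  assumes "k < n"
  shows "(\<Sum>m<n. f m) = (\<Sum>m<k. f m) + f k + (\<Sum>m\<in>{Suc k..<n}. f m)"
proof -
  have e: "{..<n} = {..<Suc k} \<union> {Suc k..<n}" using assms by auto
  have "(\<Sum>m<n. f m) = (\<Sum>m<Suc k. f m) + (\<Sum>m\<in>{Suc k..<n}. f m)"
    unfolding e by (rule sum.union_disjoint) auto
  then show ?thesis by simp
qed

lemma QR:
  "indep n k V \<Longrightarrow> k \<le> n \<and> (\<exists>M D. good n M \<and> ortho n M \<and>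
      (\<forall>j<k. \<forall>m. k \<le> m \<and> m < n \<longrightarrow> (\<Sum>i<n. M i m * V j i) = 0) \<and>
      (\<forall>m<k. \<forall>i<n. M i m = (\<Sum>j<k. D m j * V j i)))"
proof (induction k)
  case 0
  show ?case using good_idm[of n] ortho_idm[of n] by (intro conjI exI[of _ idm]) auto
next
  case (Suc k)
  from Suc.IH[OF indep_Suc[OF Suc.prems]] obtain M D where kn: "k \<le> n" and
    M: "good n M" "ortho n M" and MZ: "\<forall>j<k. \<forall>m. k \<le> m \<and> m < n \<longrightarrow> (\<Sum>i<n. M i m * V j i) = 0"
    and MD: "\<forall>m<k. \<forall>i<n. M i m = (\<Sum>j<k. D m j * V j i)" by blast
  define g where "g m = (\<Sum>i<n. M i m * V k i)" for m
  have spanfact: "(\<Sum>m<k. a m * M i m) = (\<Sum>j<k. (\<Sum>m<k. a m * D m j) * V j i)" if "i < n" for a i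
  proof -
    have "(\<Sum>m<k. a m * M i m) = (\<Sum>m<k. a m * (\<Sum>j<k. D m j * V j i))"
      using MD that by (intro sum.cong) auto
    also have "\<dots> = (\<Sum>j<k. (\<Sum>m<k. a m * D m j) * V j i)"
      by (simp add: sum_distrib_left sum_distrib_right mult_ac) (rule sum.swap)
    finally show ?thesis .
  qed
  have kn': "k < n"
  proof (rule ccontr)
    assume "\<not> k < n"
    then have kk: "k = n" using kn by simp
    have "\<forall>i<n. V k i = (\<Sum>j<k. (\<Sum>m<k. g m * D m j) * V j i)"
    proof (intro allI impI)
      fix i assume i: "i < n"
      have "V k i = (\<Sum>m<n. g m * M i m)" unfolding g_def
        by (rule completeness[OF M(2) i])
      also have "\<dots> = (\<Sum>m<k. g m * M i m)" using kk by simp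
      also have "\<dots> = (\<Sum>j<k. (\<Sum>m<k. g m * D m j) * V j i)" by (rule spanfact[OF i])
      finally show "V k i = (\<Sum>j<k. (\<Sum>m<k. g m * D m j) * V j i)" .
    qed
    then show False by (rule indep_contra[OF Suc.prems])
  qed
  obtain W where W: "good n W" "ortho n W" "fixr n k W" and WZ: "\<forall>m. k < m \<and> m \<le> k + n \<and> m < n \<longrightarrow> tv n W g m = 0"
    using zero_lemma[OF kn', of n g] by blast
  define M' where "M' = mmul n M W"
  define g' where "g' m = (\<Sum>i<n. M' i m * V k i)" for m
  have dotM': "(\<Sum>i<n. M' i m * V j i) = (\<Sum>l<n. W l m * (\<Sum>i<n. M i l * V j i))" for m j
    unfolding M'_def mmul_def
    by (simp add: sum_distrib_left sum_distrib_right mult_ac) (rule sum.swap)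
  have g'tv: "g' m = tv n W g m" for m unfolding g'_def dotM' tv_def g_def ..
  have M'low: "M' i m = M i m" if "m < k" for i m
  proof -
    have "M' i m = (\<Sum>l<n. M i l * (if l = m then 1 else 0))"
      unfolding M'_def mmul_def using W(3) that kn' unfolding fixr_def by (intro sum.cong) auto
    also have "\<dots> = M i m" using that kn' by (simp add: delta_mult2 sum.delta)
    finally show ?thesis .
  qed
  have g'Z: "g' m = 0" if "k < m" "m < n" for m using WZ that g'tv by auto
  have M'good: "good n M'" "ortho n M'" unfolding M'_def using M W by (auto intro: good_mmul ortho_mmul)
  have expand: "V k i = (\<Sum>m<k. g' m * M i m) + g' k * M' i k" if i: "i < n" for i
  proof -
    have "V k i = (\<Sum>m<n. g' m * M' i m)" unfolding g'_def
      by (rule completeness[OF M'good(2) i])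
    also have "\<dots> = (\<Sum>m<k. g' m * M' i m) + g' k * M' i k + (\<Sum>m\<in>{Suc k..<n}. g' m * M' i m)"
      by (rule sum_split_k[OF kn'])
    also have "(\<Sum>m\<in>{Suc k..<n}. g' m * M' i m) = 0" using g'Z by (intro sum.neutral) auto
    also have "(\<Sum>m<k. g' m * M' i m) = (\<Sum>m<k. g' m * M i m)" using M'low by simp
    finally show ?thesis by simp
  qed
  have gk: "g' k \<noteq> 0"
  proof
    assume z: "g' k = 0"
    have "\<forall>i<n. V k i = (\<Sum>j<k. (\<Sum>m<k. g' m * D m j) * V j i)"
    proof (intro allI impI)
      fix i assume i: "i < n"
      show "V k i = (\<Sum>j<k. (\<Sum>m<k. g' m * D m j) * V j i)"
        unfolding expand[OF i] z spanfact[OF i] by simp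
    qed
    then show False by (rule indep_contra[OF Suc.prems])
  qed
  define D' where "D' m j = (if m < k then (if j < k then D m j else 0)
      else (if j = k then 1 / g' k else - (\<Sum>m'<k. g' m' * D m' j) / g' k))" for m j
  have span': "\<forall>m<Suc k. \<forall>i<n. M' i m = (\<Sum>j<Suc k. D' m j * V j i)"
  proof (intro allI impI)
    fix m i assume m: "m < Suc k" and i: "i < n"
    show "M' i m = (\<Sum>j<Suc k. D' m j * V j i)"
    proof (cases "m < k")
      case True
      then show ?thesis using M'low[OF True] MD i unfolding D'_def by simp
    next
      case False
      then have mk: "m = k" using m by simp
      have "M' i k = (V k i - (\<Sum>m<k. g' m * M i m)) / g' k" using expand[OF i] gk by (simp add: field_simps)
      also have "\<dots> = (V k i - (\<Sum>j<k. (\<Sum>m<k. g' m * D m j) * V j i)) / g' k" using spanfact[OF i] by simp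
      also have "\<dots> = (\<Sum>j<k. D' k j * V j i) + D' k k * V k i"
      proof -
        have "(\<Sum>j<k. D' k j * V j i) = (\<Sum>j<k. - ((\<Sum>m<k. g' m * D m j) * V j i) / g' k)"
          by (intro sum.cong) (simp_all add: D'_def)
        also have "\<dots> = - (\<Sum>j<k. (\<Sum>m<k. g' m * D m j) * V j i) / g' k"
          by (simp add: sum_divide_distrib[symmetric] sum_negf)
        finally have 1: "(\<Sum>j<k. D' k j * V j i) = - (\<Sum>j<k. (\<Sum>m<k. g' m * D m j) * V j i) / g' k" .
        have 2: "D' k k = 1 / g' k" unfolding D'_def by simp
        show ?thesis unfolding 1 2 by (simp add: diff_divide_distrib)
      qed
      finally show ?thesis using mk by simp
    qed
  qed
  have zero': "\<forall>j<Suc k. \<forall>m. Suc k \<le> m \<and> m < n \<longrightarrow> (\<Sum>i<n. M' i m * V j i) = 0"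
  proof (intro allI impI)
    fix j m assume j: "j < Suc k" and m: "Suc k \<le> m \<and> m < n"
    show "(\<Sum>i<n. M' i m * V j i) = 0"
    proof (cases "j = k")
      case True then show ?thesis using g'Z m unfolding g'_def by auto
    next
      case False
      then have jk: "j < k" using j by simp
      have "(\<Sum>l<n. W l m * (\<Sum>i<n. M i l * V j i)) = 0"
      proof (rule sum.neutral, intro ballI)
        fix l assume l: "l \<in> {..<n}"
        show "W l m * (\<Sum>i<n. M i l * V j i) = 0"
        proof (cases "l < k")
          case True
          then have "W l m = 0" using W(3) l m unfolding fixr_def by auto
          then show ?thesis by simp
        next
          case False then show ?thesis using MZ jk l by auto
        qed
      qed
      then show ?thesis unfolding dotM' .
    qed
  qed
  have "good n M' \<and> ortho n M' \<and> (\<forall>j<Suc k. \<forall>m. Suc k \<le> m \<and> m < n \<longrightarrow> (\<Sum>i<n. M' i m * V j i) = 0) \<and>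
      (\<forall>m<Suc k. \<forall>i<n. M' i m = (\<Sum>j<Suc k. D' m j * V j i))"
    using M'good span' zero' by blast
  then show ?case using kn' by (intro conjI exI[of _ M'] exI[of _ D']) auto
qed




lemma prob_PiM_NN: "prob_space (PiM I (\<lambda>_. NN))"
  by (rule prob_space_PiM) (rule prob_NN)

lemma prob_gauss: "prob_space (gauss n)"
  unfolding gauss_eq by (rule prob_PiM_NN)

lemma indep_split:
  fixes n k :: nat and Q1 Q2 :: "(nat \<Rightarrow> real) \<Rightarrow> bool"
  assumes kn: "k \<le> n"
    and S1: "{y \<in> space (gauss n). Q1 y} \<in> sets (gauss n)"
    and S2: "{y \<in> space (gauss n). Q2 y} \<in> sets (gauss n)"
    and d1: "\<And>y y'. y \<in> space (gauss n) \<Longrightarrow> y' \<in> space (gauss n) \<Longrightarrow> (\<forall>m<k. y m = y' m) \<Longrightarrow> Q1 y = Q1 y'"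
    and d2: "\<And>y y'. y \<in> space (gauss n) \<Longrightarrow> y' \<in> space (gauss n) \<Longrightarrow> (\<forall>m. k \<le> m \<and> m < n \<longrightarrow> y m = y' m) \<Longrightarrow> Q2 y = Q2 y'"
  shows "emeasure (gauss n) {y \<in> space (gauss n). Q1 y \<and> Q2 y} =
         emeasure (gauss n) {y \<in> space (gauss n). Q1 y} * emeasure (gauss n) {y \<in> space (gauss n). Q2 y}"
proof -
  define K1 where "K1 = {..<k}"
  define K2 where "K2 = {k..<n}"
  have KK: "K1 \<union> K2 = {..<n}" "K1 \<inter> K2 = {}" "finite K1" "finite K2" using kn unfolding K1_def K2_def by auto
  define P where "P = PiM K1 (\<lambda>_. NN) \<Otimes>\<^sub>M PiM K2 (\<lambda>_. NN)"
  interpret P1: prob_space "PiM K1 (\<lambda>_. NN)" by (rule prob_PiM_NN)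
  interpret P2: prob_space "PiM K2 (\<lambda>_. NN)" by (rule prob_PiM_NN)
  have D: "distr P (gauss n) (merge K1 K2) = gauss n"
    unfolding P_def gauss_eq KK(1)[symmetric] by (rule NNprod.distr_merge[OF KK(2-4)])
  have mm: "merge K1 K2 \<in> measurable P (gauss n)"
    unfolding P_def gauss_eq KK(1)[symmetric] by (rule measurable_merge)
  have em: "emeasure (gauss n) A = emeasure P (merge K1 K2 -` A \<inter> space P)" if "A \<in> sets (gauss n)" for A
  proof -
    have "emeasure (gauss n) A = emeasure (distr P (gauss n) (merge K1 K2)) A" using D by simp
    also have "\<dots> = emeasure P (merge K1 K2 -` A \<inter> space P)" by (rule emeasure_distr[OF mm that])
    finally show ?thesis .
  qed
  define a0 where "a0 = (\<lambda>i\<in>K1. 0::real)"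
  define b0 where "b0 = (\<lambda>i\<in>K2. 0::real)"
  have a0: "a0 \<in> space (PiM K1 (\<lambda>_. NN))" and b0: "b0 \<in> space (PiM K2 (\<lambda>_. NN))"
    unfolding a0_def b0_def by (auto simp: space_PiM)
  have mspace: "merge K1 K2 (a, b) \<in> space (gauss n)"
    if "a \<in> space (PiM K1 (\<lambda>_. NN))" "b \<in> space (PiM K2 (\<lambda>_. NN))" for a b
    using measurable_space[OF mm, of "(a,b)"] that unfolding P_def by (simp add: space_pair_measure)
  define B1 where "B1 = {a \<in> space (PiM K1 (\<lambda>_. NN)). Q1 (merge K1 K2 (a, b0))}"
  define B2 where "B2 = {b \<in> space (PiM K2 (\<lambda>_. NN)). Q2 (merge K1 K2 (a0, b))}"
  have B1: "B1 \<in> sets (PiM K1 (\<lambda>_. NN))"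
  proof -
    have m: "(\<lambda>a. merge K1 K2 (a, b0)) \<in> measurable (PiM K1 (\<lambda>_. NN)) (gauss n)"
      using measurable_comp[OF measurable_Pair[OF measurable_ident_sets[OF refl] measurable_const[OF b0]] mm[unfolded P_def]]
      by (simp add: o_def)
    have "B1 = (\<lambda>a. merge K1 K2 (a, b0)) -` {y \<in> space (gauss n). Q1 y} \<inter> space (PiM K1 (\<lambda>_. NN))"
      unfolding B1_def using mspace b0 by auto
    then show ?thesis using measurable_sets[OF m S1] by simp
  qed
  have B2: "B2 \<in> sets (PiM K2 (\<lambda>_. NN))"
  proof -
    have m: "(\<lambda>b. merge K1 K2 (a0, b)) \<in> measurable (PiM K2 (\<lambda>_. NN)) (gauss n)"
      using measurable_comp[OF measurable_Pair[OF measurable_const[OF a0] measurable_ident_sets[OF refl]] mm[unfolded P_def]]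
      by (simp add: o_def)
    have "B2 = (\<lambda>b. merge K1 K2 (a0, b)) -` {y \<in> space (gauss n). Q2 y} \<inter> space (PiM K2 (\<lambda>_. NN))"
      unfolding B2_def using mspace a0 by auto
    then show ?thesis using measurable_sets[OF m S2] by simp
  qed
  have q1: "Q1 (merge K1 K2 (a, b)) = Q1 (merge K1 K2 (a, b0))"
    if "a \<in> space (PiM K1 (\<lambda>_. NN))" "b \<in> space (PiM K2 (\<lambda>_. NN))" for a b
    by (rule d1[OF mspace[OF that] mspace[OF that(1) b0]]) (auto simp: merge_def K1_def)
  have q2: "Q2 (merge K1 K2 (a, b)) = Q2 (merge K1 K2 (a0, b))"
    if "a \<in> space (PiM K1 (\<lambda>_. NN))" "b \<in> space (PiM K2 (\<lambda>_. NN))" for a b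
    by (rule d2[OF mspace[OF that] mspace[OF a0 that(2)]]) (auto simp: merge_def K1_def K2_def)
  have spP: "space P = space (PiM K1 (\<lambda>_. NN)) \<times> space (PiM K2 (\<lambda>_. NN))"
    unfolding P_def by (simp add: space_pair_measure)
  have pre12: "merge K1 K2 -` {y \<in> space (gauss n). Q1 y \<and> Q2 y} \<inter> space P = B1 \<times> B2"
    unfolding spP B1_def B2_def using q1 q2 mspace by auto
  have pre1: "merge K1 K2 -` {y \<in> space (gauss n). Q1 y} \<inter> space P = B1 \<times> space (PiM K2 (\<lambda>_. NN))"
    unfolding spP B1_def using q1 mspace by auto
  have pre2: "merge K1 K2 -` {y \<in> space (gauss n). Q2 y} \<inter> space P = space (PiM K1 (\<lambda>_. NN)) \<times> B2"
    unfolding spP B2_def using q2 mspace by auto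
  have S12: "{y \<in> space (gauss n). Q1 y \<and> Q2 y} \<in> sets (gauss n)"
  proof -
    have "{y \<in> space (gauss n). Q1 y \<and> Q2 y} = {y \<in> space (gauss n). Q1 y} \<inter> {y \<in> space (gauss n). Q2 y}" by auto
    then show ?thesis using S1 S2 by simp
  qed
  have "emeasure (gauss n) {y \<in> space (gauss n). Q1 y \<and> Q2 y} = emeasure P (B1 \<times> B2)"
    using em[OF S12] pre12 by simp
  also have "\<dots> = emeasure (PiM K1 (\<lambda>_. NN)) B1 * emeasure (PiM K2 (\<lambda>_. NN)) B2"
    unfolding P_def by (rule P2.emeasure_pair_measure_Times[OF B1 B2])
  also have "emeasure (PiM K1 (\<lambda>_. NN)) B1 = emeasure (gauss n) {y \<in> space (gauss n). Q1 y}"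
  proof -
    have "emeasure (gauss n) {y \<in> space (gauss n). Q1 y} = emeasure P (B1 \<times> space (PiM K2 (\<lambda>_. NN)))"
      using em[OF S1] pre1 by simp
    also have "\<dots> = emeasure (PiM K1 (\<lambda>_. NN)) B1"
      unfolding P_def by (simp add: P2.emeasure_pair_measure_Times[OF B1 sets.top] P2.emeasure_space_1)
    finally show ?thesis by simp
  qed
  also have "emeasure (PiM K2 (\<lambda>_. NN)) B2 = emeasure (gauss n) {y \<in> space (gauss n). Q2 y}"
  proof -
    have "emeasure (gauss n) {y \<in> space (gauss n). Q2 y} = emeasure P (space (PiM K1 (\<lambda>_. NN)) \<times> B2)"
      using em[OF S2] pre2 by simp
    also have "\<dots> = emeasure (PiM K2 (\<lambda>_. NN)) B2"
      unfolding P_def by (simp add: P2.emeasure_pair_measure_Times[OF sets.top B2] P1.emeasure_space_1)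
    finally show ?thesis by simp
  qed
  finally show ?thesis .
qed

lemma good_pre:
  assumes "good n M" "E \<in> sets (gauss n)"
  shows "emeasure (gauss n) E = emeasure (gauss n) {y \<in> space (gauss n). mv n M y \<in> E}"
proof -
  have "emeasure (gauss n) E = (\<integral>\<^sup>+x. indicator E x \<partial>gauss n)" using assms(2) by simp
  also have "\<dots> = (\<integral>\<^sup>+x. indicator E (mv n M x) \<partial>gauss n)"
    using assms(1) assms(2) unfolding good_def by (metis borel_measurable_indicator)
  also have "\<dots> = (\<integral>\<^sup>+x. indicator {y \<in> space (gauss n). mv n M y \<in> E} x \<partial>gauss n)"
    by (rule nn_integral_cong) (auto simp: indicator_def)
  also have "\<dots> = emeasure (gauss n) {y \<in> space (gauss n). mv n M y \<in> E}"
    using measurable_sets[OF mv_meas assms(2)] by (simp add: vimage_def Int_def conj_commute)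
  finally show ?thesis .
qed



lemma finite_supp[simp]: "finite (supp p \<beta>)"
  unfolding supp_def by auto

lemma supp_neg[simp]: "supp p (\<lambda>j. - \<beta> j) = supp p \<beta>"
  unfolding supp_def by auto

lemma inact_neg[simp]: "inact p (\<lambda>j. - \<beta> j) = inact p \<beta>"
  unfolding inact_def by simp

lemma sgnv_neg[simp]: "sgnv (\<lambda>j. - \<beta> j) = (\<lambda>j. - sgnv \<beta> j)"
  unfolding sgnv_def by (simp add: sgn_minus)

lemma S_sets: "S_event n p lam \<beta> X \<in> sets (gauss n)"
  unfolding S_event_def uvec_def Let_def gauss_eq by measurable

lemma I_sets: "I_event n p lam \<beta> X \<in> sets (gauss n)"
  unfolding I_event_def vvec_def Let_def gauss_eq by measurable

lemma distr_NN_uminus: "distr NN NN uminus = NN"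
proof (rule measure_eqI)
  fix A assume A: "A \<in> sets (distr NN NN uminus)"
  then have A': "A \<in> sets borel" by simp
  have "(uminus::real\<Rightarrow>real) -` A \<inter> space borel \<in> sets borel" by (rule measurable_sets[OF _ A']) measurable
  then have pre: "(uminus::real\<Rightarrow>real) -` A \<in> sets borel" by simp
  have "emeasure (distr NN NN uminus) A = emeasure NN (uminus -` A \<inter> space NN)"
  proof (rule emeasure_distr)
    show "uminus \<in> measurable NN NN" by measurable
  qed (use A in simp)
  also have "\<dots> = (\<integral>\<^sup>+x. ennreal (std_normal_density x) * indicator A (- x) \<partial>lborel)"
    using A' pre by (subst emeasure_density) (auto intro!: nn_integral_cong simp: indicator_def)
  also have "\<dots> = (\<integral>\<^sup>+x. ennreal (std_normal_density (0 + (-1) * x)) * indicator A (- (0 + (-1) * x)) \<partial>lborel)"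
    using nn_integral_real_affine[of "\<lambda>x. ennreal (std_normal_density x) * indicator A (- x)" "-1" 0] A' by simp
  also have "\<dots> = (\<integral>\<^sup>+x. ennreal (std_normal_density x) * indicator A x \<partial>lborel)"
    by (simp add: std_normal_density_def)
  also have "\<dots> = emeasure NN A"
    using A' by (subst emeasure_density) (auto intro!: nn_integral_cong simp: indicator_def)
  finally show "emeasure (distr NN NN uminus) A = emeasure NN A" .
qed simp

definition negm :: "nat \<Rightarrow> nat \<Rightarrow> real" where "negm a b = (if a = b then -1 else 0)"

lemma mv_negm: "mv n negm e = (\<lambda>i\<in>{..<n}. - e i)"
proof -
  have h: "(if a = b then -1 else 0) * (x::real) = (if a = b then -x else 0)" for a b :: nat and x by simp
  show ?thesis unfolding mv_def negm_def by (auto simp: fun_eq_iff h sum.delta)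
qed

lemma good_negm: "good n negm"
  unfolding good_def
proof
  fix g :: "_ \<Rightarrow> ennreal" assume g[measurable]: "g \<in> borel_measurable (gauss n)"
  have pps: "product_prob_space (\<lambda>_::nat. NN)" by (intro product_prob_spaceI prob_NN)
  have D: "distr (gauss n) (gauss n) (compose {..<n} uminus) = gauss n"
    unfolding gauss_eq
    by (subst distr_PiM_finite_prob_space[OF _ pps pps]) (simp_all add: distr_NN_uminus)
  have cm: "compose {..<n} uminus \<in> measurable (gauss n) (gauss n)"
    unfolding gauss_eq compose_def by (intro measurable_restrict) measurable
  have "(\<integral>\<^sup>+x. g (mv n negm x) \<partial>gauss n) = (\<integral>\<^sup>+x. g (compose {..<n} uminus x) \<partial>gauss n)"
    by (simp add: mv_negm compose_def)
  also have "\<dots> = (\<integral>\<^sup>+x. g x \<partial>distr (gauss n) (gauss n) (compose {..<n} uminus))"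
    by (rule nn_integral_distr[symmetric, OF cm]) simp
  also have "\<dots> = (\<integral>\<^sup>+x. g x \<partial>gauss n)" using D by simp
  finally show "(\<integral>\<^sup>+x. g (mv n negm x) \<partial>gauss n) = (\<integral>\<^sup>+x. g x \<partial>gauss n)" .
qed

lemma PA_neg[simp]: "PA n p (\<lambda>j. - \<beta> j) X = PA n p \<beta> X"
  unfolding PA_def by simp

lemma uvec_neg: "uvec n p lam (\<lambda>j. - \<beta> j) X e j = uvec n p lam \<beta> X (mv n negm e) j"
  unfolding uvec_def Let_def mv_negm by (simp add: sum_negf)

lemma vvec_neg: "vvec n p lam (\<lambda>j. - \<beta> j) X e j = - vvec n p lam \<beta> X (mv n negm e) j"
  unfolding vvec_def Let_def mv_negm by (simp add: sum_negf algebra_simps sum_subtractf)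

lemma space_gauss: "space (gauss n) = (\<Pi>\<^sub>E i\<in>{..<n}. UNIV)"
  unfolding gauss_eq by (simp add: space_PiM)

lemma mv_space: "mv n M e \<in> space (gauss n)"
  unfolding space_gauss mv_def by auto

lemma phi_neg: "phi n p lam X (\<lambda>j. - \<beta> j) = phi n p lam X \<beta>"
proof -
  let ?E = "S_event n p lam \<beta> X \<inter> I_event n p lam \<beta> X"
  have E: "?E \<in> sets (gauss n)" using S_sets I_sets by blast
  have sgnb: "sgn (- \<beta> j) * (- \<beta> j) = sgn (\<beta> j) * \<beta> j" for j by (simp add: sgn_minus)
  have eq: "S_event n p lam (\<lambda>j. - \<beta> j) X \<inter> I_event n p lam (\<lambda>j. - \<beta> j) X = {y \<in> space (gauss n). mv n negm y \<in> ?E}"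
    unfolding S_event_def I_event_def using mv_space
    by (auto simp: uvec_neg vvec_neg sgnv_def sgn_minus)
  have "emeasure (gauss n) ?E = emeasure (gauss n) {y \<in> space (gauss n). mv n negm y \<in> ?E}"
    by (rule good_pre[OF good_negm E])
  then show ?thesis unfolding phi_def eq measure_def by simp
qed

lemma n_pos:
  assumes "design n p \<beta> X" "supp p \<beta> \<noteq> {}" shows "0 < n"
proof (rule ccontr)
  assume "\<not> 0 < n" then have n: "n = 0" by simp
  obtain j where "j \<in> supp p \<beta>" using assms(2) by blast
  then have "Vd n X j > 0" using assms(1) unfolding design_def by blast
  then show False unfolding Vd_def n by simp
qed

definition Gram :: "nat \<Rightarrow> (nat \<Rightarrow> nat \<Rightarrow> real) \<Rightarrow> nat \<Rightarrow> nat \<Rightarrow> real" where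
  "Gram n X j k = (\<Sum>l<n. Fm n X l j * Fm n X l k)"

lemma Cm_Gram: "Cm n X j k = Gram n X j k / real n"
  unfolding Cm_def Gram_def by simp

lemma Gram_inv:
  assumes d: "design n p \<beta> X" and ne: "supp p \<beta> \<noteq> {}"
  defines "A \<equiv> supp p \<beta>"
  shows "\<forall>j\<in>A. \<forall>a\<in>A. (\<Sum>k\<in>A. mat_inv_on A (Gram n X) j k * Gram n X k a) = (if j = a then 1 else 0)"
proof -
  have n: "0 < n" by (rule n_pos[OF d ne])
  obtain N where N1: "\<forall>i\<in>A. \<forall>j\<in>A. (\<Sum>k\<in>A. Cm n X i k * N k j) = (if i = j then 1 else 0)"
    and N2: "\<forall>i\<in>A. \<forall>j\<in>A. (\<Sum>k\<in>A. N i k * Cm n X k j) = (if i = j then 1 else 0)"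
    using d unfolding design_def mat_invertible_on_def A_def by blast
  define N' where "N' i j = N i j / real n" for i j
  have "\<forall>i\<in>A. \<forall>j\<in>A. (\<Sum>k\<in>A. Gram n X i k * N' k j) = (if i = j then 1 else 0)"
    using N1 n unfolding N'_def Cm_Gram by (simp add: mult.commute)
  moreover have "\<forall>i\<in>A. \<forall>j\<in>A. (\<Sum>k\<in>A. N' i k * Gram n X k j) = (if i = j then 1 else 0)"
    using N2 n unfolding N'_def Cm_Gram by (simp add: mult.commute)
  ultimately have ex: "\<exists>N. (\<forall>i\<in>A. \<forall>j\<in>A. (\<Sum>k\<in>A. Gram n X i k * N k j) = (if i = j then 1 else 0))
      \<and> (\<forall>i\<in>A. \<forall>j\<in>A. (\<Sum>k\<in>A. N i k * Gram n X k j) = (if i = j then 1 else 0))" by blast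
  show ?thesis using someI_ex[OF ex] unfolding mat_inv_on_def by blast
qed

lemma PA_eq: "PA n p \<beta> X i i' = (\<Sum>j\<in>supp p \<beta>. \<Sum>k\<in>supp p \<beta>. Fm n X i j * mat_inv_on (supp p \<beta>) (Gram n X) j k * Fm n X i' k)"
proof -
  have "(\<lambda>j k. \<Sum>l<n. Fm n X l j * Fm n X l k) = Gram n X" by (simp add: fun_eq_iff Gram_def)
  then show ?thesis unfolding PA_def Let_def by simp
qed

lemma PA_fix:
  assumes d: "design n p \<beta> X" and ne: "supp p \<beta> \<noteq> {}" and a: "a \<in> supp p \<beta>"
  shows "(\<Sum>i'<n. PA n p \<beta> X i i' * Fm n X i' a) = Fm n X i a"
proof -
  define A where "A = supp p \<beta>"
  define G where "G = mat_inv_on A (Gram n X)"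
  define F where "F = Fm n X"
  have GI: "\<forall>j\<in>A. \<forall>a\<in>A. (\<Sum>k\<in>A. G j k * Gram n X k a) = (if j = a then 1 else 0)"
    using Gram_inv[OF d ne] unfolding G_def A_def .
  have aA: "a \<in> A" "finite A" using a unfolding A_def by auto
  have "(\<Sum>i'<n. PA n p \<beta> X i i' * F i' a) = (\<Sum>i'<n. (\<Sum>j\<in>A. \<Sum>k\<in>A. F i j * G j k * F i' k) * F i' a)"
    unfolding PA_eq A_def G_def F_def ..
  also have "\<dots> = (\<Sum>i'<n. \<Sum>j\<in>A. \<Sum>k\<in>A. F i j * G j k * (F i' k * F i' a))"
    by (simp add: sum_distrib_left sum_distrib_right mult_ac)
  also have "\<dots> = (\<Sum>j\<in>A. \<Sum>i'<n. \<Sum>k\<in>A. F i j * G j k * (F i' k * F i' a))"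
    by (rule sum.swap)
  also have "\<dots> = (\<Sum>j\<in>A. \<Sum>k\<in>A. \<Sum>i'<n. F i j * G j k * (F i' k * F i' a))"
    by (rule sum.cong[OF refl], rule sum.swap)
  also have "\<dots> = (\<Sum>j\<in>A. \<Sum>k\<in>A. F i j * G j k * Gram n X k a)"
    by (simp add: sum_distrib_left Gram_def F_def)
  also have "\<dots> = (\<Sum>j\<in>A. F i j * (\<Sum>k\<in>A. G j k * Gram n X k a))"
    by (simp add: sum_distrib_left mult_ac)
  also have "\<dots> = (\<Sum>j\<in>A. F i j * (if j = a then 1 else 0))"
    using GI aA by (intro sum.cong) auto
  also have "\<dots> = F i a" using aA by (simp add: delta_mult2 sum.delta)
  finally show ?thesis unfolding F_def .
qed

lemma vvec_shift:
  assumes d: "design n p \<beta> X" and ne: "supp p \<beta> \<noteq> {}"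
    and h: "\<forall>j<k. h j \<in> supp p \<beta>"
    and e': "\<forall>i<n. e' i = e i + (\<Sum>j<k. dd j * Fm n X i (h j))"
  shows "vvec n p lam \<beta> X e' jj = vvec n p lam \<beta> X e jj"
proof -
  have key: "e' i - (\<Sum>i'<n. PA n p \<beta> X i i' * e' i') = e i - (\<Sum>i'<n. PA n p \<beta> X i i' * e i')" if i: "i < n" for i
  proof -
    have "(\<Sum>i'<n. PA n p \<beta> X i i' * e' i') = (\<Sum>i'<n. PA n p \<beta> X i i' * e i') + (\<Sum>i'<n. PA n p \<beta> X i i' * (\<Sum>j<k. dd j * Fm n X i' (h j)))"
      using e' by (simp add: sum.distrib[symmetric] algebra_simps)
    also have "(\<Sum>i'<n. PA n p \<beta> X i i' * (\<Sum>j<k. dd j * Fm n X i' (h j))) = (\<Sum>j<k. dd j * (\<Sum>i'<n. PA n p \<beta> X i i' * Fm n X i' (h j)))"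
      by (simp add: sum_distrib_left mult_ac) (rule sum.swap)
    also have "\<dots> = (\<Sum>j<k. dd j * Fm n X i (h j))"
      using PA_fix[OF d ne] h by simp
    finally show ?thesis using e' i by simp
  qed
  have "(\<Sum>i<n. Fm n X i jj * (e' i - (\<Sum>i'<n. PA n p \<beta> X i i' * e' i'))) =
        (\<Sum>i<n. Fm n X i jj * (e i - (\<Sum>i'<n. PA n p \<beta> X i i' * e i')))"
    by (rule sum.cong) (simp_all add: key)
  then show ?thesis unfolding vvec_def Let_def by simp
qed

lemma uvec_dep:
  assumes "\<forall>b\<in>supp p \<beta>. (\<Sum>i<n. Fm n X i b * e i) = (\<Sum>i<n. Fm n X i b * e' i)"
  shows "uvec n p lam \<beta> X e j = uvec n p lam \<beta> X e' j"
  unfolding uvec_def Let_def using assms by (simp cong: sum.cong)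

lemma sum_trunc:
  fixes k n :: nat
  assumes "k \<le> n" "\<forall>m. k \<le> m \<and> m < n \<longrightarrow> f m = 0"
  shows "(\<Sum>m<n. f m) = (\<Sum>m<k. f m)"
proof (rule sum.mono_neutral_right)
  show "finite {..<n}" by simp
  show "{..<k} \<subseteq> {..<n}" using assms(1) by auto
  show "\<forall>i\<in>{..<n} - {..<k}. f i = 0" using assms(2) by auto
qed

lemma indep_supp:
  assumes d: "design n p \<beta> X" and ne: "supp p \<beta> \<noteq> {}"
    and h: "bij_betw h {..<card (supp p \<beta>)} (supp p \<beta>)"
  shows "indep n (card (supp p \<beta>)) (\<lambda>j i. Fm n X i (h j))"
  unfolding indep_def
proof (intro allI impI)
  fix c :: "nat \<Rightarrow> real" and j
  assume c: "\<forall>i<n. (\<Sum>j<card (supp p \<beta>). c j * Fm n X i (h j)) = 0" and j: "j < card (supp p \<beta>)"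
  define A where "A = supp p \<beta>"
  define k where "k = card A"
  have hA: "bij_betw h {..<k} A" using h unfolding A_def k_def .
  have fA: "finite A" unfolding A_def by simp
  have n: "0 < n" by (rule n_pos[OF d ne])
  define c' where "c' a = c (inv_into {..<k} h a)" for a
  have c'h: "c' (h j) = c j" if "j < k" for j
    unfolding c'_def using hA that by (simp add: bij_betw_def inv_into_f_f)
  have r: "(\<Sum>a\<in>A. c' a * Fm n X i a) = 0" if i: "i < n" for i
  proof -
    have "(\<Sum>a\<in>A. c' a * Fm n X i a) = (\<Sum>j<k. c' (h j) * Fm n X i (h j))"
      by (rule sum.reindex_bij_betw[OF hA, symmetric])
    also have "\<dots> = (\<Sum>j<k. c j * Fm n X i (h j))" by (simp add: c'h)
    also have "\<dots> = 0" using c i unfolding k_def A_def by simp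
    finally show ?thesis .
  qed
  have Cz: "(\<Sum>a\<in>A. Cm n X b a * c' a) = 0" for b
  proof -
    have "(\<Sum>a\<in>A. Cm n X b a * c' a) = (1 / real n) * (\<Sum>l<n. Fm n X l b * (\<Sum>a\<in>A. c' a * Fm n X l a))"
      unfolding Cm_def by (simp add: sum_distrib_left sum_distrib_right mult_ac) (rule sum.swap)
    also have "\<dots> = 0" using r by simp
    finally show ?thesis .
  qed
  obtain N where N2: "\<forall>i\<in>A. \<forall>j\<in>A. (\<Sum>k\<in>A. N i k * Cm n X k j) = (if i = j then 1 else 0)"
    using d unfolding design_def mat_invertible_on_def A_def by blast
  have c'0: "c' b = 0" if b: "b \<in> A" for b
  proof -
    have "c' b = (\<Sum>a\<in>A. (if b = a then 1 else 0) * c' a)" using b fA by (simp add: delta_mult1 sum.delta)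
    also have "\<dots> = (\<Sum>a\<in>A. (\<Sum>l\<in>A. N b l * Cm n X l a) * c' a)" using N2 b by (intro sum.cong) auto
    also have "\<dots> = (\<Sum>l\<in>A. N b l * (\<Sum>a\<in>A. Cm n X l a * c' a))"
      by (simp add: sum_distrib_left sum_distrib_right mult_ac) (rule sum.swap)
    also have "\<dots> = 0" using Cz by simp
    finally show ?thesis .
  qed
  have "h j \<in> A" using hA j unfolding k_def A_def by (auto simp: bij_betw_def)
  then show "c j = 0" using c'0 c'h j unfolding k_def A_def by metis
qed

lemma mv_apply: "i < n \<Longrightarrow> mv n M y i = (\<Sum>m<n. M i m * y m)"
  unfolding mv_def by simp

lemma factor:
  assumes d: "design n p \<beta> X" and ne: "supp p \<beta> \<noteq> {}"
  shows "emeasure (gauss n) (S_event n p lam \<beta> X \<inter> I_event n p lam \<beta> X) =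
         emeasure (gauss n) (S_event n p lam \<beta> X) * emeasure (gauss n) (I_event n p lam \<beta> X)"
proof -
  define A where "A = supp p \<beta>"
  define k where "k = card A"
  obtain h where h0: "bij_betw h {0..<k} A" using ex_bij_betw_nat_finite[of A] unfolding k_def A_def by auto
  have hA: "bij_betw h {..<card (supp p \<beta>)} (supp p \<beta>)" using h0 unfolding k_def A_def by (simp add: atLeast0LessThan)
  define V where "V j i = Fm n X i (h j)" for j i
  have ind: "indep n k V" unfolding V_def k_def A_def by (rule indep_supp[OF d ne hA])
  obtain M D where kn: "k \<le> n" and M: "good n M" "ortho n M"
    and MZ: "\<forall>j<k. \<forall>m. k \<le> m \<and> m < n \<longrightarrow> (\<Sum>i<n. M i m * V j i) = 0"
    and MD: "\<forall>m<k. \<forall>i<n. M i m = (\<Sum>j<k. D m j * V j i)"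
    using QR[OF ind] by blast
  have hin: "\<forall>j<k. h j \<in> supp p \<beta>" using hA unfolding k_def A_def by (auto simp: bij_betw_def)
  have hsurj: "\<exists>j<k. b = h j" if "b \<in> supp p \<beta>" for b
    using hA that unfolding k_def A_def bij_betw_def by auto
  let ?S = "S_event n p lam \<beta> X" and ?I = "I_event n p lam \<beta> X"
  let ?T = "mv n M"
  have d1: "(?T y \<in> ?S) = (?T y' \<in> ?S)"
    if y: "y \<in> space (gauss n)" "y' \<in> space (gauss n)" and agree: "\<forall>m<k. y m = y' m" for y y'
  proof -
    have "\<forall>b\<in>supp p \<beta>. (\<Sum>i<n. Fm n X i b * ?T y i) = (\<Sum>i<n. Fm n X i b * ?T y' i)"
    proof
      fix b assume b: "b \<in> supp p \<beta>"
      obtain j0 where j0: "j0 < k" "b = h j0" using hsurj[OF b] by blast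
      have ex: "(\<Sum>i<n. Fm n X i b * ?T z i) = (\<Sum>m<n. z m * (\<Sum>i<n. M i m * V j0 i))" for z
      proof -
        have "(\<Sum>i<n. Fm n X i b * ?T z i) = (\<Sum>i<n. Fm n X i b * (\<Sum>m<n. M i m * z m))"
          by (intro sum.cong) (simp_all add: mv_apply)
        also have "\<dots> = (\<Sum>m<n. z m * (\<Sum>i<n. M i m * V j0 i))"
          unfolding V_def j0(2) by (simp add: sum_distrib_left sum_distrib_right mult_ac) (rule sum.swap)
        finally show ?thesis .
      qed
      have "(\<Sum>m<n. y m * (\<Sum>i<n. M i m * V j0 i)) = (\<Sum>m<n. y' m * (\<Sum>i<n. M i m * V j0 i))"
      proof (rule sum.cong[OF refl])
        fix m assume "m \<in> {..<n}"
        then show "y m * (\<Sum>i<n. M i m * V j0 i) = y' m * (\<Sum>i<n. M i m * V j0 i)"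
          using agree MZ j0(1) by (cases "m < k") auto
      qed
      then show "(\<Sum>i<n. Fm n X i b * ?T y i) = (\<Sum>i<n. Fm n X i b * ?T y' i)" unfolding ex .
    qed
    then have "\<And>j. uvec n p lam \<beta> X (?T y) j = uvec n p lam \<beta> X (?T y') j" by (rule uvec_dep)
    then show ?thesis unfolding S_event_def using mv_space by simp
  qed
  have d2: "(?T y \<in> ?I) = (?T y' \<in> ?I)"
    if y: "y \<in> space (gauss n)" "y' \<in> space (gauss n)" and agree: "\<forall>m. k \<le> m \<and> m < n \<longrightarrow> y m = y' m" for y y'
  proof -
    define dd where "dd j = (\<Sum>m<k. (y' m - y m) * D m j)" for j
    have e': "\<forall>i<n. ?T y' i = ?T y i + (\<Sum>j<k. dd j * Fm n X i (h j))"
    proof (intro allI impI)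
      fix i assume i: "i < n"
      have "?T y' i - ?T y i = (\<Sum>m<n. M i m * (y' m - y m))"
        using i by (simp add: mv_apply sum_subtractf algebra_simps)
      also have "\<dots> = (\<Sum>m<k. M i m * (y' m - y m))"
        by (rule sum_trunc[OF kn]) (use agree in auto)
      also have "\<dots> = (\<Sum>m<k. (y' m - y m) * (\<Sum>j<k. D m j * V j i))"
        using MD i by (intro sum.cong) (auto simp: mult.commute)
      also have "\<dots> = (\<Sum>j<k. dd j * Fm n X i (h j))"
        unfolding dd_def V_def by (simp add: sum_distrib_left sum_distrib_right mult_ac) (rule sum.swap)
      finally show "?T y' i = ?T y i + (\<Sum>j<k. dd j * Fm n X i (h j))" by simp
    qed
    have "\<And>jj. vvec n p lam \<beta> X (?T y') jj = vvec n p lam \<beta> X (?T y) jj"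
      by (rule vvec_shift[OF d ne hin e'])
    then show ?thesis unfolding I_event_def using mv_space by simp
  qed
  have Ssets: "?S \<in> sets (gauss n)" "?I \<in> sets (gauss n)" by (rule S_sets, rule I_sets)
  have pre: "{y \<in> space (gauss n). ?T y \<in> E} \<in> sets (gauss n)" if "E \<in> sets (gauss n)" for E
  proof -
    have "{y \<in> space (gauss n). ?T y \<in> E} = ?T -` E \<inter> space (gauss n)" by auto
    then show ?thesis using measurable_sets[OF mv_meas that] by simp
  qed
  have "emeasure (gauss n) (?S \<inter> ?I) = emeasure (gauss n) {y \<in> space (gauss n). ?T y \<in> ?S \<and> ?T y \<in> ?I}"
    using good_pre[OF M(1), of "?S \<inter> ?I"] Ssets by simp
  also have "\<dots> = emeasure (gauss n) {y \<in> space (gauss n). ?T y \<in> ?S} * emeasure (gauss n) {y \<in> space (gauss n). ?T y \<in> ?I}"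
    by (rule indep_split[OF kn pre[OF Ssets(1)] pre[OF Ssets(2)] d1 d2])
  also have "\<dots> = emeasure (gauss n) ?S * emeasure (gauss n) ?I"
    using good_pre[OF M(1) Ssets(1)] good_pre[OF M(1) Ssets(2)] by simp
  finally show ?thesis .
qed


theorem lemma1:
  fixes n p :: nat and lam :: real and X :: "nat \<Rightarrow> nat \<Rightarrow> real" and \<beta> :: "nat \<Rightarrow> real"
  assumes "design n p \<beta> X"
    and "supp p \<beta> \<noteq> {}"
    and "lam > 0"
  shows "phi n p lam X \<beta> = measure (gauss n) (S_event n p lam \<beta> X) * measure (gauss n) (I_event n p lam \<beta> X)
         \<and> measure (gauss n) (S_event n p lam \<beta> X) * measure (gauss n) (I_event n p lam \<beta> X)
             = phi n p lam X (\<lambda>j. - \<beta> j)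
         \<and> (\<forall>Xs. design n p \<beta> Xs \<and> (\<forall>Y. design n p \<beta> Y \<longrightarrow> phi n p lam Y \<beta> \<le> phi n p lam Xs \<beta>)
               \<longrightarrow> (\<forall>Y. design n p (\<lambda>j. - \<beta> j) Y \<longrightarrow> phi n p lam Y (\<lambda>j. - \<beta> j) \<le> phi n p lam Xs (\<lambda>j. - \<beta> j)))"
proof -
  have f: "phi n p lam X \<beta> = measure (gauss n) (S_event n p lam \<beta> X) * measure (gauss n) (I_event n p lam \<beta> X)"
    unfolding phi_def measure_def factor[OF assms(1,2)] by (simp add: enn2real_mult)
  have dn: "design n p (\<lambda>j. - \<beta> j) Y = design n p \<beta> Y" for Y
    unfolding design_def by simp
  show ?thesis using f phi_neg dn by metis
qed

end
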